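(* Let $A=(a_0,\dots,a_{n-1})$ be an array of pairwise distinct numbers, $k_1<k_2$ positive integers. Consider an iteration of Cover-approx$(A,k_1,k_2)$ whose computed suffix is $(b,c)$, and suppose the next iteration computes the prefix $(b,d)$. Let $Y=(y_1,\dots,y_{k_1})$ be the lexicographically minimal (with respect to the sequence of positions) increasing subsequence of length $k_1$ of $(a_b,\dots,a_c)$, and $X'=(x'_1,\dots,x'_{k_2})$ the lexicographically minimal increasing subsequence of length $k_2$ of $(a_b,\dots,a_d)$, where $y_t,x'_t$ denote positions. Then $x'_i\ge y_i$ for all $1\le i\le k_1$.
   Context: For $i\le j$, $\mathrm{LIS}(i,j)$ denotes the length of a longest increasing subsequence of $(a_i,\dots,a_j)$. Cover-approx$(A,k_1,k_2)$: set $C=\emptyset$, $i=0$. Repeat: let $j$ be the smallest index $\ge i$ with $\mathrm{LIS}(i,j)\ge k_2$; if none exists, return $C$. Let $q$ be the largest index $\le j$ with $\mathrm{LIS}(q,j)\ge k_1$. Add the segment $(q,j,L)$ to $C$, where $L$ is a longest increasing subsequence of $(a_q,\dots,a_j)$, and set $i=q$. In an iteration, $(i,j)$ is called the computed prefix and $(q,j)$ the computed suffix. *)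

theory Defs
  imports Main "HOL.Real"
begin

text \<open>The array A = (a_0,...,a_{n-1}) is a list; positions are 0-based list indices.\<close>

definition is_inc_subseq :: "real list \<Rightarrow> nat \<Rightarrow> nat \<Rightarrow> nat list \<Rightarrow> bool" where
  "is_inc_subseq A i j ps \<longleftrightarrow>
     j < length A \<and> set ps \<subseteq> {i..j} \<and> sorted_wrt (\<lambda>p q. p < q \<and> A ! p < A ! q) ps"

definition LIS :: "real list \<Rightarrow> nat \<Rightarrow> nat \<Rightarrow> nat" where
  "LIS A i j = Max (length ` {ps. is_inc_subseq A i j ps})"

text \<open>One iteration of Cover-approx started at index i: returns Some (q, j), where
  (i,j) is the computed prefix and (q,j) the computed suffix, or None if the
  algorithm stops.\<close>
definition cover_step :: "real list \<Rightarrow> nat \<Rightarrow> nat \<Rightarrow> nat \<Rightarrow> (nat \<times> nat) option" where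
  "cover_step A k1 k2 i =
     (if \<exists>j. i \<le> j \<and> j < length A \<and> k2 \<le> LIS A i j then
        (let j = (LEAST j. i \<le> j \<and> j < length A \<and> k2 \<le> LIS A i j);
             q = (GREATEST q. q \<le> j \<and> k1 \<le> LIS A q j)
         in Some (q, j))
      else None)"

text \<open>Value of the variable i at the start of iteration m (None if the algorithm
  has already returned before iteration m).\<close>
fun cover_start :: "real list \<Rightarrow> nat \<Rightarrow> nat \<Rightarrow> nat \<Rightarrow> nat option" where
  "cover_start A k1 k2 0 = Some 0"
| "cover_start A k1 k2 (Suc m) =
     (case cover_start A k1 k2 m of
        None \<Rightarrow> None
      | Some i \<Rightarrow> map_option fst (cover_step A k1 k2 i))"

definition lexmin_inc_subseq :: "real list \<Rightarrow> nat \<Rightarrow> nat \<Rightarrow> nat \<Rightarrow> nat list \<Rightarrow> bool" where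
  "lexmin_inc_subseq A i j k Y \<longleftrightarrow>
     is_inc_subseq A i j Y \<and> length Y = k \<and>
     (\<forall>Z. is_inc_subseq A i j Z \<and> length Z = k \<longrightarrow>
          Y = Z \<or> (Y, Z) \<in> lexord {(p, q). p < q})"

end

theory Submission
  imports Defs
begin

lemma chains_finite: "finite {ps. is_inc_subseq A i j ps}"
proof -
  have "{ps. is_inc_subseq A i j ps} \<subseteq> {xs. set xs \<subseteq> {i..j} \<and> length xs \<le> card {i..j}}"
  proof
    fix ps assume "ps \<in> {ps. is_inc_subseq A i j ps}"
    then have s: "set ps \<subseteq> {i..j}" and so: "sorted_wrt (\<lambda>p q. p < q \<and> A ! p < A ! q) ps"
      by (auto simp: is_inc_subseq_def)
    have "sorted_wrt (<) ps" using so by (rule sorted_wrt_mono_rel[rotated]) auto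
    then have "distinct ps" by (simp add: strict_sorted_iff)
    then have "length ps = card (set ps)" by (simp add: distinct_card)
    also have "\<dots> \<le> card {i..j}" using s by (intro card_mono) auto
    finally show "ps \<in> {xs. set xs \<subseteq> {i..j} \<and> length xs \<le> card {i..j}}" using s by auto
  qed
  moreover have "finite {xs. set xs \<subseteq> {i..j} \<and> length xs \<le> card {i..j}}"
    by (rule finite_lists_length_le) auto
  ultimately show ?thesis by (rule finite_subset)
qed

lemma chain_le_LIS: "is_inc_subseq A i j ps \<Longrightarrow> length ps \<le> LIS A i j"
  unfolding LIS_def using chains_finite by (intro Max_ge) auto

lemma LIS_ex: assumes "j < length A" shows "\<exists>ps. is_inc_subseq A i j ps \<and> length ps = LIS A i j"
proof -
  have "is_inc_subseq A i j []" using assms by (simp add: is_inc_subseq_def)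
  then have "LIS A i j \<in> length ` {ps. is_inc_subseq A i j ps}"
    unfolding LIS_def using chains_finite by (intro Max_in) auto
  then show ?thesis by auto
qed

lemma splice:
  assumes tr: "transp R" and sx: "sorted_wrt R xs" and sy: "sorted_wrt R ys"
    and a: "a < length xs" and link: "e < length ys \<Longrightarrow> R (xs!a) (ys!e)"
  shows "sorted_wrt R (take (Suc a) xs @ drop e ys)"
proof -
  have "\<forall>x\<in>set (take (Suc a) xs). \<forall>y\<in>set (drop e ys). R x y"
  proof (intro ballI)
    fix x y assume x: "x \<in> set (take (Suc a) xs)" and y: "y \<in> set (drop e ys)"
    from x obtain i0 where "i0 < length (take (Suc a) xs)" "x = take (Suc a) xs ! i0" by (auto simp: in_set_conv_nth)
    then obtain i where i: "i \<le> a" "x = xs!i" by (metis less_Suc_eq_le length_take min_less_iff_conj nth_take)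
    from y obtain k where k: "e + k < length ys" "y = ys!(e+k)" proof -
      from y obtain k0 where "k0 < length (drop e ys)" "y = drop e ys ! k0" by (auto simp: in_set_conv_nth)
      then show ?thesis using that[of k0] by simp
    qed
    have l: "R (xs!a) (ys!e)" using link k by auto
    have 1: "x = xs!a \<or> R x (xs!a)" using i sx a
      by (metis le_neq_implies_less sorted_wrt_nth_less)
    have 2: "y = ys!e \<or> R (ys!e) y" using k sy
      by (metis le_add1 le_neq_implies_less sorted_wrt_nth_less add_0_right nat_add_left_cancel_less not_gr0)
    show "R x y" using 1 2 l tr by (metis transpD)
  qed
  then show ?thesis using sx sy by (simp add: sorted_wrt_append sorted_wrt_take sorted_wrt_drop)
qed

lemma chain_mono: "sorted_wrt (\<lambda>p q. p < q \<and> P p q) (xs::nat list) \<Longrightarrow> i \<le> a \<Longrightarrow> a < length xs \<Longrightarrow> xs!i \<le> xs!a"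
proof (cases "i = a")
  case False
  assume "sorted_wrt (\<lambda>p q. p < q \<and> P p q) xs" "i \<le> a" "a < length xs"
  then have "xs!i < xs!a" using False sorted_wrt_nth_less[of _ xs i a] by fastforce
  then show ?thesis by simp
qed simp


lemma take_le: "sorted_wrt (\<lambda>p q. p < q \<and> P p q) (xs::nat list) \<Longrightarrow> a < length xs \<Longrightarrow> x \<in> set (take (Suc a) xs) \<Longrightarrow> x \<le> xs!a"
proof -
  assume so: "sorted_wrt (\<lambda>p q. p < q \<and> P p q) xs" and a: "a < length xs" and x: "x \<in> set (take (Suc a) xs)"
  from x obtain i0 where "i0 < length (take (Suc a) xs)" "x = take (Suc a) xs ! i0" by (auto simp: in_set_conv_nth)
  then obtain i where i: "i \<le> a" "x = xs!i" by (metis less_Suc_eq_le length_take min_less_iff_conj nth_take)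
  then show ?thesis using chain_mono[OF so i(1) a] by simp
qed

theorem lemma4:
  fixes A :: "real list" and k1 k2 m i b c q' d :: nat and Y X' :: "nat list"
  assumes "distinct A"
    and "0 < k1" and "k1 < k2"
    and "cover_start A k1 k2 m = Some i"
    and "cover_step A k1 k2 i = Some (b, c)"
    and "cover_step A k1 k2 b = Some (q', d)"
    and "lexmin_inc_subseq A b c k1 Y"
    and "lexmin_inc_subseq A b d k2 X'"
  shows "\<forall>t < k1. Y ! t \<le> X' ! t"
proof (rule ccontr)
  assume neg: "\<not> (\<forall>t < k1. Y ! t \<le> X' ! t)"
  define R where "R = (\<lambda>p q. p < q \<and> A ! p < A ! q)"
  have trR: "transp R" unfolding R_def by (auto intro: transpI)
  have ex1: "\<exists>j. i \<le> j \<and> j < length A \<and> k2 \<le> LIS A i j"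
    using assms(5) by (auto simp: cover_step_def split: if_splits)
  have cdef: "c = (LEAST j. i \<le> j \<and> j < length A \<and> k2 \<le> LIS A i j)"
   and bdef: "b = (GREATEST q. q \<le> c \<and> k1 \<le> LIS A q c)"
    using assms(5) ex1 by (auto simp: cover_step_def Let_def)
  have cP: "i \<le> c \<and> c < length A \<and> k2 \<le> LIS A i c"
    unfolding cdef using ex1 by (rule LeastI_ex)
  have bP: "b \<le> c \<and> k1 \<le> LIS A b c"
    unfolding bdef
    by (rule GreatestI_nat[where k=i and b=c]) (use cP assms(3) in auto)
  have bmax: "LIS A q c < k1" if "b < q" "q \<le> c" for q
  proof (rule ccontr)
    assume "\<not> LIS A q c < k1"
    then have "q \<le> b" unfolding bdef
      by (intro Greatest_le_nat[where b=c]) (use that in auto)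
    then show False using that by simp
  qed
  have ex2: "\<exists>j. b \<le> j \<and> j < length A \<and> k2 \<le> LIS A b j"
    using assms(6) by (auto simp: cover_step_def split: if_splits)
  have ddef: "d = (LEAST j. b \<le> j \<and> j < length A \<and> k2 \<le> LIS A b j)"
    using assms(6) ex2 by (auto simp: cover_step_def Let_def)
  have dP: "b \<le> d \<and> d < length A \<and> k2 \<le> LIS A b d"
    unfolding ddef using ex2 by (rule LeastI_ex)
  have dmin: "LIS A b j < k2" if "b \<le> j" "j < d" for j
  proof -
    have "\<not> (b \<le> j \<and> j < length A \<and> k2 \<le> LIS A b j)"
      unfolding ddef using that(2) unfolding ddef by (rule not_less_Least)
    then show ?thesis using that dP by auto
  qed
  have F1: "length ps \<le> k1" if ch: "is_inc_subseq A b c ps" for ps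
  proof (rule ccontr)
    assume len: "\<not> length ps \<le> k1"
    then obtain p rest where ps: "ps = p # rest" by (cases ps) auto
    have pb: "b \<le> p" using ch ps by (auto simp: is_inc_subseq_def)
    have rest: "is_inc_subseq A (Suc b) c rest" using ch ps pb
      unfolding is_inc_subseq_def by (auto simp: subset_iff Suc_le_eq)
    have "rest \<noteq> []" using len ps assms(2) by auto
    then have "Suc b \<le> c" using rest by (cases rest) (auto simp: is_inc_subseq_def)
    moreover have "k1 \<le> LIS A (Suc b) c" using chain_le_LIS[OF rest] len ps by simp
    ultimately show False using bmax[of "Suc b"] by simp
  qed
  have cd: "c < d"
  proof (rule ccontr)
    assume "\<not> c < d"
    obtain ps where ps: "is_inc_subseq A b d ps" "length ps = LIS A b d"
      using LIS_ex dP by blast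
    have "is_inc_subseq A b c (take (Suc k1) ps)"
      using ps(1) \<open>\<not> c < d\<close> cP
      by (auto simp: is_inc_subseq_def sorted_wrt_take dest: in_set_takeD)
    moreover have "length (take (Suc k1) ps) = Suc k1" using ps dP assms(3) by simp
    ultimately show False using F1 by fastforce
  qed
  have F2: "length ps \<le> k2" if ch: "is_inc_subseq A b d ps" for ps
  proof (rule ccontr)
    assume len: "\<not> length ps \<le> k2"
    have so: "sorted_wrt R ps" using ch by (simp add: is_inc_subseq_def R_def)
    have "is_inc_subseq A b (d - 1) (take k2 ps)"
    proof -
      have "x \<le> d - 1" if x: "x \<in> set (take k2 ps)" for x
      proof -
        from x obtain i0 where i0: "i0 < k2" "x = ps ! i0"
          using len by (auto simp: in_set_conv_nth)
        have "ps ! i0 < ps ! k2" using so i0 len unfolding R_def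
          by (metis (no_types, lifting) not_le sorted_wrt_nth_less)
        moreover have "ps ! k2 \<in> set ps" using len by simp
        then have "ps ! k2 \<le> d" using ch by (auto simp: is_inc_subseq_def)
        ultimately show ?thesis using i0 by simp
      qed
      then show ?thesis using ch dP cd
        by (auto simp: is_inc_subseq_def sorted_wrt_take dest: in_set_takeD)
    qed
    then have "k2 \<le> LIS A b (d - 1)" using chain_le_LIS len by fastforce
    moreover have "b \<le> d - 1" using conjunct1[OF bP] cd by linarith
    ultimately show False using dmin[of "d - 1"] cd by simp
  qed
  define X where "X = X'"
  have Yc: "is_inc_subseq A b c Y" "length Y = k1" and Ymin: "\<And>Z. is_inc_subseq A b c Z \<Longrightarrow> length Z = k1 \<Longrightarrow> Y = Z \<or> (Y, Z) \<in> lexord {(p, q). p < q}"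
    using assms(7) by (auto simp: lexmin_inc_subseq_def)
  have Xc: "is_inc_subseq A b d X" "length X = k2"
    using assms(8) by (auto simp: lexmin_inc_subseq_def X_def)
  have sY: "sorted_wrt R Y" and sX: "sorted_wrt R X"
    using Yc Xc by (auto simp: is_inc_subseq_def R_def)
  have sY': "sorted_wrt (\<lambda>p q. p < q \<and> A ! p < A ! q) Y" and sX': "sorted_wrt (\<lambda>p q. p < q \<and> A ! p < A ! q) X"
    using Yc Xc by (auto simp: is_inc_subseq_def)
  have Yin: "b \<le> Y!s \<and> Y!s \<le> c" if "s < k1" for s
  proof -
    have "Y!s \<in> set Y" using Yc that by simp
    then show ?thesis using Yc by (auto simp: is_inc_subseq_def)
  qed
  have Xin: "b \<le> X!s \<and> X!s \<le> d" if "s < k2" for s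
  proof -
    have "X!s \<in> set X" using Xc that by simp
    then show ?thesis using Xc by (auto simp: is_inc_subseq_def)
  qed
  have Ylt: "Y!s < Y!s' \<and> A!(Y!s) < A!(Y!s')" if "s < s'" "s' < k1" for s s'
    using sorted_wrt_nth_less[OF sY that(1)] that Yc(2) by (simp add: R_def)
  have Xlt: "X!s < X!s' \<and> A!(X!s) < A!(X!s')" if "s < s'" "s' < k2" for s s'
    using sorted_wrt_nth_less[OF sX that(1)] that Xc(2) by (simp add: R_def)
  have vne: "A!p \<noteq> A!q" if "p < length A" "q < length A" "p \<noteq> q" for p q
    using assms(1) that nth_eq_iff_index_eq by blast
  have lenA: "c < length A" "d < length A" using cP dP by auto
  have ext: "\<exists>t. t < k1 \<and> X!t < Y!t" using neg by (auto simp: X_def not_le)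
  define t where "t = (LEAST t. t < k1 \<and> X!t < Y!t)"
  have tP: "t < k1 \<and> X!t < Y!t" unfolding t_def using ext by (rule LeastI_ex)
  have tmin: "Y!s \<le> X!s" if "s < t" for s
  proof -
    have "\<not> (s < k1 \<and> X!s < Y!s)" unfolding t_def using that unfolding t_def by (rule not_less_Least)
    then show ?thesis using that tP by auto
  qed
  have tk2: "t < k2" using tP assms(3) by simp
  have V1: "A!(Y!t) < A!(X!t)"
  proof (rule ccontr)
    assume "\<not> A!(Y!t) < A!(X!t)"
    moreover have "A!(Y!t) \<noteq> A!(X!t)" using vne[of "Y!t" "X!t"] tP Yin[of t] Xin[OF tk2] lenA by auto
    ultimately have lt: "A!(X!t) < A!(Y!t)" by simp
    define S where "S = take (Suc t) X @ drop t Y"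
    have "sorted_wrt R S" unfolding S_def
      by (rule splice[OF trR sX sY]) (use tP tk2 Xc lt in \<open>auto simp: R_def\<close>)
    moreover have "set S \<subseteq> {b..c}"
    proof
      fix x assume "x \<in> set S"
      then consider "x \<in> set (take (Suc t) X)" | "x \<in> set Y" unfolding S_def by (auto dest: in_set_dropD)
      then show "x \<in> {b..c}"
      proof cases
        case 1
        then have "x \<le> X!t" using take_le[OF sX'] tk2 Xc by simp
        moreover have "b \<le> x" using 1 Xc by (auto simp: is_inc_subseq_def dest!: in_set_takeD)
        ultimately show ?thesis using tP Yin[of t] by auto
      next
        case 2 then show ?thesis using Yc by (auto simp: is_inc_subseq_def)
      qed
    qed
    ultimately have "is_inc_subseq A b c S" using lenA by (simp add: is_inc_subseq_def R_def)
    moreover have "length S = Suc k1" unfolding S_def using tP tk2 Xc Yc by simp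
    ultimately show False using F1 by fastforce
  qed
  have jex: "\<exists>j. t \<le> j \<and> j < k1 \<and> X!j < Y!j" using tP by auto
  define j where "j = (GREATEST j. t \<le> j \<and> j < k1 \<and> X!j < Y!j)"
  have jP: "t \<le> j \<and> j < k1 \<and> X!j < Y!j" unfolding j_def
    by (rule GreatestI_nat[where k=t and b=k1]) (use tP in auto)
  have jmax: "Y!s \<le> X!s" if "j < s" "s < k1" for s
  proof (rule ccontr)
    assume "\<not> Y!s \<le> X!s"
    then have "s \<le> j" unfolding j_def
      by (intro Greatest_le_nat[where b=k1]) (use that jP in auto)
    then show False using that by simp
  qed
  have jk2: "j < k2" using jP assms(3) by simp
  have link3: "R (X!j) (Y!(Suc j))" if sj: "Suc j < k1"
  proof -
    have sk2: "Suc j < k2" using sj assms(3) by simp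
    have ge: "Y!(Suc j) \<le> X!(Suc j)" using jmax[of "Suc j"] sj by simp
    have pos: "X!j < Y!(Suc j)" using jP Ylt[of j "Suc j"] sj by auto
    have xx: "A!(X!j) < A!(X!(Suc j))" using Xlt[of j "Suc j"] sk2 by simp
    have "A!(X!(Suc j)) \<le> A!(Y!(Suc j))"
    proof (cases "X!(Suc j) = Y!(Suc j)")
      case True then show ?thesis by simp
    next
      case False
      show ?thesis
      proof (rule ccontr)
        assume "\<not> A!(X!(Suc j)) \<le> A!(Y!(Suc j))"
        then have lt: "A!(Y!(Suc j)) < A!(X!(Suc j))" by simp
        define S where "S = take (Suc (Suc j)) Y @ drop (Suc j) X"
        have "sorted_wrt R S" unfolding S_def
          by (rule splice[OF trR sY sX]) (use sj sk2 Xc Yc lt ge False in \<open>auto simp: R_def\<close>)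
        moreover have "set S \<subseteq> {b..d}"
          using Yc Xc cd by (auto simp: S_def is_inc_subseq_def dest!: in_set_takeD in_set_dropD)
        ultimately have "is_inc_subseq A b d S" using lenA by (simp add: is_inc_subseq_def R_def)
        moreover have "length S = Suc k2" unfolding S_def using sj sk2 Xc Yc by simp
        ultimately show False using F2 by fastforce
      qed
    qed
    then show ?thesis using pos xx by (simp add: R_def)
  qed
  define S3 where "S3 = take (Suc j) X @ drop (Suc j) Y"
  have sS3: "sorted_wrt R S3" unfolding S3_def
    by (rule splice[OF trR sX sY]) (use jk2 Xc Yc link3 in auto)
  have S3in: "set S3 \<subseteq> {b..c}"
  proof
    fix x assume "x \<in> set S3"
    then consider "x \<in> set (take (Suc j) X)" | "x \<in> set Y" unfolding S3_def by (auto dest: in_set_dropD)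
    then show "x \<in> {b..c}"
    proof cases
      case 1
      then have "x \<le> X!j" using take_le[OF sX'] jk2 Xc by simp
      moreover have "b \<le> x" using 1 Xc by (auto simp: is_inc_subseq_def dest!: in_set_takeD)
      ultimately show ?thesis using jP Yin[of j] by auto
    next
      case 2 then show ?thesis using Yc by (auto simp: is_inc_subseq_def)
    qed
  qed
  have lS3: "length S3 = k1" unfolding S3_def using jP jk2 Xc Yc by simp
  have S3t: "S3 ! t = X ! t" unfolding S3_def using jP jk2 Xc by (simp add: nth_append)
  define Z where "Z = take t Y @ drop t S3"
  have sZ: "sorted_wrt R Z"
  proof (cases t)
    case 0 then show ?thesis using sS3 by (simp add: Z_def)
  next
    case (Suc t')
    have "Y!t' \<le> X!t'" using tmin Suc by simp
    moreover have "X!t' < X!t \<and> A!(Y!t') < A!(Y!t)" using Xlt[of t' t] Ylt[of t' t] Suc tP tk2 by simp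
    ultimately have "R (Y!t') (S3!t)" using V1 S3t by (simp add: R_def)
    then show ?thesis unfolding Z_def Suc
      by (intro splice[OF trR sY sS3]) (use Suc tP Yc in auto)
  qed
  have "set Z \<subseteq> {b..c}" using S3in Yc
    by (auto simp: Z_def is_inc_subseq_def dest!: in_set_takeD in_set_dropD)
  then have Zc: "is_inc_subseq A b c Z" using sZ lenA by (simp add: is_inc_subseq_def R_def)
  have lZ: "length Z = k1" using lS3 tP Yc by (simp add: Z_def)
  have Zeq: "Z = take t Y @ X!t # drop (Suc t) S3"
    unfolding Z_def using Cons_nth_drop_Suc[of t S3] lS3 tP S3t by simp
  have Yeq: "Y = take t Y @ Y!t # drop (Suc t) Y"
    using id_take_nth_drop[of t Y] tP Yc by simp
  have "Y \<noteq> Z" using Zeq Yeq tP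
    by (metis less_irrefl nth_append_length length_take min_def Yc(2) not_le order.strict_iff_order)
  moreover have "(Y, Z) \<notin> lexord {(p, q). p < q}"
  proof
    assume "(Y, Z) \<in> lexord {(p, q). p < q}"
    then have "(take t Y @ Y!t # drop (Suc t) Y, take t Y @ X!t # drop (Suc t) S3) \<in> lexord {(p, q). p < q}"
      using Yeq Zeq by simp
    then show False using tP by (simp add: lexord_same_pref_iff)
  qed
  ultimately show False using Ymin[OF Zc lZ] by simp
qed
end
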